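(* Let $d\ge2$, $p\in(2,2^* )$, $\theta\in[\vartheta(p,d),1]$ and $\Lambda>0$. Let $u\in H^1(\mathcal C)\setminus\{0\}$ satisfy $\mathcal Q^\theta_\Lambda[u]=\mathsf K_{\rm CKN}(\theta,p,\Lambda)$ and $\|u\|_2^2=\frac{\theta}{t+\Lambda}\|u\|_p^p$, where $t=\|\nabla u\|_2^2/\|u\|_2^2$, and assume $u$ solves $-\Delta u+\mu u=u^{p-1}$ on $\mathcal C$ with $\theta\mu=(1-\theta)t+\Lambda$. Then $\mathcal Q^1_\mu[u]\le\mathsf K^*_{\rm CKN}(1,p,\mu)$.
   Context: $2^*=\infty$ if $d=2$, $2^*=2d/(d-2)$ if $d\ge3$; $\vartheta(p,d)=\frac{d(p-2)}{2p}$. $\mathcal C=\mathbb R\times S^{d-1}$ with points $(s,\omega)$ and measure $d\mu=|S^{d-1}|^{-1}d\omega\,ds$; $\Delta$ is the Laplace–Beltrami operator on $\mathcal C$; $\|u\|_q=(\int_{\mathcal C}|u|^qd\mu)^{1/q}$. $\mathcal Q^\theta_\Lambda[u]=\frac{(\|\nabla u\|_2^2+\Lambda\|u\|_2^2)^\theta\|u\|_2^{2(1-\theta)}}{\|u\|_p^2}$; $\mathsf K_{\rm CKN}(\theta,p,\Lambda)=\inf_{u\ne0}\mathcal Q^\theta_\Lambda[u]$; $\mathsf K^*_{\rm CKN}(\theta,p,\Lambda)$ is the same infimum over functions depending only on $s$, equal to $\big[\tfrac{2p\theta+2-p}{(p-2)^2}\big]^{\frac{p-2}{2p}}\big[\tfrac{2p\theta}{2p\theta+2-p}\big]^{\theta}\big[\tfrac{p+2}{4}\big]^{\frac{6-p}{2p}}\Big[\tfrac{\sqrt\pi\,\Gamma(\frac2{p-2})}{\Gamma(\frac2{p-2}+\frac12)}\Big]^{\frac{p-2}{p}}\Lambda^{\theta-\frac{p-2}{2p}}$.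 *)

theory Defs
  imports "HOL-Analysis.Analysis"
begin

text \<open>
  The cylinder C = R x S^{d-1} (d = CARD('n)) is represented through the conformal
  diffeomorphism (s,w) |-> e^s w onto R^d minus the origin.  A function
  u :: real => real^'n => real on C (only values with w on the unit sphere matter)
  corresponds to U y = u (ln |y|) (y / |y|).  Under this map
    d mu = |S^{d-1}|^{-1} |y|^{-d} dy   and   |grad_C u|^2 = |y|^2 |grad_y U|^2.
\<close>

definition to_euclid :: "(real \<Rightarrow> real^'n \<Rightarrow> real) \<Rightarrow> real^'n \<Rightarrow> real" where
  "to_euclid u y = u (ln (norm y)) (y /\<^sub>R norm y)"

definition sphere_area :: "'n::finite itself \<Rightarrow> real" where
  "sphere_area _ = real CARD('n) * measure lebesgue (ball (0::real^'n) 1)"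

definition cyl_measure :: "(real^'n::finite) measure" where
  "cyl_measure = density lebesgue
     (\<lambda>y. ennreal (if y = 0 then 0 else 1 / (sphere_area TYPE('n) * norm y ^ CARD('n))))"

definition test_fn :: "(real^'n::finite \<Rightarrow> real) \<Rightarrow> (real^'n \<Rightarrow> real^'n) \<Rightarrow> bool" where
  "test_fn \<phi> D\<phi> \<longleftrightarrow>
     (\<forall>y. (\<phi> has_derivative (\<lambda>h. D\<phi> y \<bullet> h)) (at y)) \<and> continuous_on UNIV D\<phi> \<and>
     compact (closure {y. \<phi> y \<noteq> 0}) \<and> 0 \<notin> closure {y. \<phi> y \<noteq> 0}"

definition weak_grad :: "(real^'n::finite \<Rightarrow> real) \<Rightarrow> (real^'n \<Rightarrow> real^'n) \<Rightarrow> bool" where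
  "weak_grad U G \<longleftrightarrow>
     (\<forall>K. compact K \<and> 0 \<notin> K \<longrightarrow> set_integrable lebesgue K U \<and> set_integrable lebesgue K G) \<and>
     (\<forall>\<phi> D\<phi>. test_fn \<phi> D\<phi> \<longrightarrow>
        (\<forall>i. (\<integral>y. U y * D\<phi> y $ i \<partial>lebesgue) = - (\<integral>y. G y $ i * \<phi> y \<partial>lebesgue)))"

definition H1_cyl :: "(real \<Rightarrow> real^'n::finite \<Rightarrow> real) \<Rightarrow> bool" where
  "H1_cyl u \<longleftrightarrow> (\<exists>G. weak_grad (to_euclid u) G \<and>
      integrable cyl_measure (\<lambda>y. (to_euclid u y)^2) \<and>
      integrable cyl_measure (\<lambda>y. norm y ^ 2 * norm (G y) ^ 2))"

text \<open>The (a.e. unique) weak gradient, expressed in the y-variables.\<close>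
definition grad_cyl :: "(real \<Rightarrow> real^'n::finite \<Rightarrow> real) \<Rightarrow> real^'n \<Rightarrow> real^'n" where
  "grad_cyl u = (SOME G. weak_grad (to_euclid u) G)"

definition Lnorm :: "real \<Rightarrow> (real \<Rightarrow> real^'n::finite \<Rightarrow> real) \<Rightarrow> real" where
  "Lnorm q u = (\<integral>y. \<bar>to_euclid u y\<bar> powr q \<partial>cyl_measure) powr (1 / q)"

definition grad_sq :: "(real \<Rightarrow> real^'n::finite \<Rightarrow> real) \<Rightarrow> real" where
  "grad_sq u = (\<integral>y. norm y ^ 2 * norm (grad_cyl u y) ^ 2 \<partial>cyl_measure)"

definition QCKN :: "real \<Rightarrow> real \<Rightarrow> real \<Rightarrow> (real \<Rightarrow> real^'n::finite \<Rightarrow> real) \<Rightarrow> real" where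
  "QCKN \<theta> p \<Lambda> u =
     (grad_sq u + \<Lambda> * (Lnorm 2 u)^2) powr \<theta> * (Lnorm 2 u) powr (2 * (1 - \<theta>)) / (Lnorm p u)^2"

definition nonzero_cyl :: "(real \<Rightarrow> real^'n::finite \<Rightarrow> real) \<Rightarrow> bool" where
  "nonzero_cyl u \<longleftrightarrow> \<not> (AE y in lebesgue. to_euclid u y = 0)"

definition KCKN :: "'n::finite itself \<Rightarrow> real \<Rightarrow> real \<Rightarrow> real \<Rightarrow> real" where
  "KCKN _ \<theta> p \<Lambda> = (INF u \<in> {u :: real \<Rightarrow> real^'n \<Rightarrow> real. H1_cyl u \<and> nonzero_cyl u}. QCKN \<theta> p \<Lambda> u)"

definition s_only :: "(real \<Rightarrow> real^'n::finite \<Rightarrow> real) \<Rightarrow> bool" where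
  "s_only u \<longleftrightarrow> (\<forall>s w w'. norm w = 1 \<and> norm w' = 1 \<longrightarrow> u s w = u s w')"

definition KCKN_star :: "'n::finite itself \<Rightarrow> real \<Rightarrow> real \<Rightarrow> real \<Rightarrow> real" where
  "KCKN_star _ \<theta> p \<Lambda> =
     (INF u \<in> {u :: real \<Rightarrow> real^'n \<Rightarrow> real. H1_cyl u \<and> nonzero_cyl u \<and> s_only u}. QCKN \<theta> p \<Lambda> u)"

definition subcritical :: "nat \<Rightarrow> real \<Rightarrow> bool" where
  "subcritical d p \<longleftrightarrow> 2 < p \<and> (d \<ge> 3 \<longrightarrow> p < 2 * real d / (real d - 2))"

definition vartheta :: "real \<Rightarrow> nat \<Rightarrow> real" where
  "vartheta p d = real d * (p - 2) / (2 * p)"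

text \<open>Weak formulation of  -Delta u + mu u = u^{p-1}  on C (u^{p-1} read as |u|^{p-2} u).\<close>
definition weak_solution :: "real \<Rightarrow> real \<Rightarrow> (real \<Rightarrow> real^'n::finite \<Rightarrow> real) \<Rightarrow> bool" where
  "weak_solution \<mu> p u \<longleftrightarrow>
     (\<forall>\<phi> D\<phi>. test_fn \<phi> D\<phi> \<longrightarrow>
        (\<integral>y. norm y ^ 2 * (grad_cyl u y \<bullet> D\<phi> y) + \<mu> * to_euclid u y * \<phi> y \<partial>cyl_measure)
        = (\<integral>y. \<bar>to_euclid u y\<bar> powr (p - 2) * to_euclid u y * \<phi> y \<partial>cyl_measure))"

end

theory Submission
  imports Defs
begin




definition psi :: "real \<Rightarrow> real" where "psi x = (max 0 x)^2"

lemma psi_deriv: "(psi has_real_derivative 2 * max 0 x) (at x)"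
proof (cases "x = 0")
  case True
  have "((\<lambda>h. (psi (0 + h) - psi 0) / h) \<longlongrightarrow> 0) (at 0)"
  proof (rule Lim_transform_eventually)
    show "((\<lambda>h. max 0 h) \<longlongrightarrow> 0) (at (0::real))"
      by (rule tendsto_eq_intros | simp)+
    show "\<forall>\<^sub>F h in at 0. max 0 h = (psi (0 + h) - psi 0) / h"
      unfolding eventually_at_filter
      by (auto simp: psi_def power2_eq_square max_def)
  qed
  thus ?thesis using True by (simp add: DERIV_def)
next
  case False
  show ?thesis
  proof (cases "x > 0")
    case True
    have "((\<lambda>z. z^2) has_real_derivative 2 * max 0 x) (at x)"
      using True by (auto intro!: derivative_eq_intros)
    thus ?thesis
      by (rule has_field_derivative_transform_within_open[where S="{0<..}"]) (use True in \<open>auto simp: psi_def\<close>)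
  next
    case False
    hence "x < 0" using \<open>x \<noteq> 0\<close> by simp
    have "((\<lambda>z. 0) has_real_derivative 2 * max 0 x) (at x)"
      using \<open>x < 0\<close> by (auto intro!: derivative_eq_intros)
    thus ?thesis
      by (rule has_field_derivative_transform_within_open[where S="{..<0}"]) (use \<open>x<0\<close> in \<open>auto simp: psi_def\<close>)
  qed
qed

definition H :: "real \<Rightarrow> real" where "H x = psi ((x - 4) * (9 - x))"
definition H' :: "real \<Rightarrow> real" where "H' x = 2 * max 0 ((x - 4) * (9 - x)) * (13 - 2 * x)"

lemma H_deriv: "(H has_real_derivative H' x) (at x)"
proof -
  have "((\<lambda>x. psi ((x - 4) * (9 - x))) has_real_derivative (2 * max 0 ((x - 4) * (9 - x))) * (13 - 2*x)) (at x)"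
    by (rule DERIV_chain2[OF psi_deriv]) (auto intro!: derivative_eq_intros)
  thus ?thesis unfolding H_def[abs_def] H'_def by simp
qed

lemma H_cont: "continuous_on A H"
  unfolding H_def psi_def by (intro continuous_intros)

lemma H'_cont: "continuous_on A H'"
  unfolding H'_def by (intro continuous_intros)

lemma q_nonpos: "\<not> (4 < x \<and> x < 9) \<Longrightarrow> (x - 4) * (9 - (x::real)) \<le> 0"
  by (cases "x \<le> 4") (auto intro: mult_nonpos_nonneg mult_nonneg_nonpos)

lemma H_zero: "\<not> (4 < x \<and> x < 9) \<Longrightarrow> H x = 0"
  unfolding H_def psi_def using q_nonpos[of x] by (simp add: max_def)

lemma H'_zero: "\<not> (4 < x \<and> x < 9) \<Longrightarrow> H' x = 0"
  unfolding H'_def using q_nonpos[of x] by (simp add: max_def)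

lemma H_pos: "4 < x \<Longrightarrow> x < 9 \<Longrightarrow> H x > 0"
  unfolding H_def psi_def by (auto simp: max_def)

definition UU :: "real^'n::finite \<Rightarrow> real" where "UU y = H (y \<bullet> y)"
definition GG :: "real^'n::finite \<Rightarrow> real^'n" where "GG y = (2 * H' (y \<bullet> y)) *\<^sub>R y"

lemma UU_deriv: "(UU has_derivative (\<lambda>h. GG y \<bullet> h)) (at y)"
proof -
  have "((\<lambda>y. H (y \<bullet> y)) has_derivative (\<lambda>h. (y \<bullet> h + h \<bullet> y) * H' (y \<bullet> y))) (at y)"
    by (rule DERIV_compose_FDERIV[OF H_deriv]) (auto intro!: derivative_eq_intros)
  thus ?thesis unfolding UU_def[abs_def] GG_def
    by (simp add: inner_commute algebra_simps)
qed

lemma UU_cont: "continuous_on A UU"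
  unfolding UU_def by (intro continuous_on_compose2[OF H_cont] continuous_intros) auto

lemma GG_cont: "continuous_on A GG"
  unfolding GG_def by (intro continuous_intros continuous_on_compose2[OF H'_cont]) auto



lemma cs_facts:
  fixes g :: "real^'n::finite \<Rightarrow> real" and K :: "(real^'n) set"
  assumes cont: "continuous_on UNIV g" and K: "compact K" and z: "\<And>y. y \<notin> K \<Longrightarrow> g y = 0"
  shows "integrable lborel g" "integrable lebesgue g" "integral\<^sup>L lebesgue g = integral\<^sup>L lborel g"
    "K \<subseteq> cbox a b \<Longrightarrow> integral (cbox a b) g = integral\<^sup>L lborel g"
proof -
  have eq: "(\<lambda>x. indicator K x *\<^sub>R g x) = g"
    using z by (auto simp: indicator_def fun_eq_iff)
  show il: "integrable lborel g"
    using borel_integrable_compact[OF K continuous_on_subset[OF cont]] eq by simp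
  have meas: "g \<in> borel_measurable lborel"
    using borel_measurable_continuous_onI[OF cont] by simp
  show "integrable lebesgue g" using integrable_completion[OF meas] il by simp
  show ie: "integral\<^sup>L lebesgue g = integral\<^sup>L lborel g" using integral_completion[OF meas] by simp
  assume sub: "K \<subseteq> cbox a b"
  have "integral (cbox a b) g = integral UNIV (\<lambda>x. if x \<in> cbox a b then g x else 0)"
    by (rule integral_restrict_UNIV[symmetric])
  also have "(\<lambda>x. if x \<in> cbox a b then g x else 0) = g" using z sub by (auto simp: fun_eq_iff)
  also have "integral UNIV g = integral\<^sup>L lebesgue g"
    using integral_lebesgue \<open>integrable lebesgue g\<close> by blast
  finally show "integral (cbox a b) g = integral\<^sup>L lborel g" using ie by simp
qed

lemma deriv_zero_outside:
  fixes f :: "real^'n::finite \<Rightarrow> real" and Df :: "real^'n \<Rightarrow> real^'n"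
  assumes der: "\<And>y. (f has_derivative (\<lambda>h. Df y \<bullet> h)) (at y)"
   and S: "compact S" and supp: "\<And>y. y \<notin> S \<Longrightarrow> f y = 0"
   and y: "y \<notin> S"
  shows "Df y = 0"
proof -
  have "((\<lambda>_. 0) has_derivative (\<lambda>h. Df y \<bullet> h)) (at y)"
    by (rule has_derivative_transform_within_open[OF der[of y], where s="- S"])
       (use S y supp compact_imp_closed in auto)
  moreover have "((\<lambda>_. 0::real) has_derivative (\<lambda>h. 0)) (at y)" by simp
  ultimately have "(\<lambda>h. Df y \<bullet> h) = (\<lambda>h. 0)" by (rule has_derivative_unique)
  hence "Df y \<bullet> Df y = 0" by metis
  thus ?thesis by simp
qed

lemma ibp_zero:
  fixes f :: "real^'n::finite \<Rightarrow> real" and Df :: "real^'n \<Rightarrow> real^'n"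
  assumes der: "\<And>y. (f has_derivative (\<lambda>h. Df y \<bullet> h)) (at y)"
   and cont: "continuous_on UNIV Df"
   and S: "compact S" and supp: "\<And>y. y \<notin> S \<Longrightarrow> f y = 0"
  shows "integrable lebesgue (\<lambda>y. Df y $ i)" "(\<integral>y. Df y $ i \<partial>lebesgue) = 0"
proof -
  define e :: "real^'n" where "e = axis i 1"
  have Dfz: "Df y = 0" if "y \<notin> S" for y
    using deriv_zero_outside[OF der S supp that] .
  have fcont: "continuous_on UNIV f"
    using der has_derivative_continuous continuous_at_imp_continuous_on by blast
  have "bounded S" using S compact_imp_bounded by auto
  then obtain R where R: "S \<subseteq> cball 0 R" using bounded_subset_cball by (metis bounded_subset_ballD ball_subset_cball order.trans)
  have "bounded (cball (0::real^'n) (R + 1))" by simp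
  then obtain a :: "real^'n" where B: "cball 0 (R + 1) \<subseteq> cbox (-a) a"
    by (rule bounded_subset_cbox_symmetric)
  have ne: "norm e = 1" by (simp add: e_def)
  define U :: "real set" where "U = {-1<..<1}"
  have shiftz: "f (y + h *\<^sub>R e) = 0" if "h \<in> U" "y \<notin> cbox (-a) a" for h y
  proof -
    have "y \<notin> cball 0 (R + 1)" using B that by auto
    hence "norm y > R + 1" by simp
    moreover have "norm y \<le> norm (y + h *\<^sub>R e) + norm (h *\<^sub>R e)"
      by (metis add_diff_cancel norm_triangle_ineq4)
    moreover have "norm (h *\<^sub>R e) < 1" using that ne by (auto simp: U_def abs_less_iff)
    ultimately have "norm (y + h *\<^sub>R e) > R" by simp
    hence "y + h *\<^sub>R e \<notin> S" using R by auto
    thus ?thesis using supp by simp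
  qed
  have fshcont: "continuous_on UNIV (\<lambda>y. f (y + h *\<^sub>R e))" for h
    by (intro continuous_on_compose2[OF fcont] continuous_intros) auto
  have C: "integral (cbox (-a) a) (\<lambda>y. f (y + h *\<^sub>R e)) = integral\<^sup>L lborel f" if "h \<in> U" for h
  proof -
    have "integral (cbox (-a) a) (\<lambda>y. f (y + h *\<^sub>R e)) = integral\<^sup>L lborel (\<lambda>y. f (y + h *\<^sub>R e))"
      by (rule cs_facts(4)[OF fshcont compact_cbox]) (use shiftz that in auto)
    also have "\<dots> = integral\<^sup>L lborel (\<lambda>y. f (h *\<^sub>R e + y))" by (simp add: add.commute)
    also have "\<dots> = integral\<^sup>L (distr lborel borel ((+) (h *\<^sub>R e))) f"
      by (rule integral_distr[symmetric]) (auto intro: borel_measurable_continuous_onI fcont)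
    also have "\<dots> = integral\<^sup>L lborel f" by (simp add: lborel_distr_plus)
    finally show ?thesis .
  qed
  have Dcont: "continuous_on (U \<times> cbox (-a) a) (\<lambda>(h, y). Df (y + h *\<^sub>R e) \<bullet> e)"
    by (auto simp: split_beta intro!: continuous_on_compose2[OF cont] continuous_intros)
  have L: "((\<lambda>h. integral (cbox (-a) a) (\<lambda>y. f (y + h *\<^sub>R e))) has_field_derivative
          integral (cbox (-a) a) (\<lambda>y. Df (y + 0 *\<^sub>R e) \<bullet> e)) (at 0 within U)"
  proof (rule leibniz_rule_field_derivative[where fx="\<lambda>h y. Df (y + h *\<^sub>R e) \<bullet> e"])
    fix h y assume "h \<in> U" "y \<in> cbox (-a) a"
    have "((\<lambda>h. f (y + h *\<^sub>R e)) has_derivative (\<lambda>k. Df (y + h *\<^sub>R e) \<bullet> (0 + k *\<^sub>R e))) (at h within U)"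
      by (rule has_derivative_compose[OF _ der, where f="\<lambda>h. y + h *\<^sub>R e", unfolded o_def])
         (auto intro!: derivative_eq_intros)
    moreover have "(\<lambda>k. Df (y + h *\<^sub>R e) \<bullet> (0 + k *\<^sub>R e)) = (*) (Df (y + h *\<^sub>R e) \<bullet> e)"
      by (auto simp: fun_eq_iff)
    ultimately show "((\<lambda>h. f (y + h *\<^sub>R e)) has_field_derivative Df (y + h *\<^sub>R e) \<bullet> e) (at h within U)"
      by (simp add: has_field_derivative_def)
  next
    fix h assume "h \<in> U"
    show "(\<lambda>y. f (y + h *\<^sub>R e)) integrable_on cbox (-a) a"
      by (rule integrable_continuous) (rule continuous_on_subset[OF fshcont], simp)
  next
    show "continuous_on (U \<times> cbox (-a) a) (\<lambda>(h, y). Df (y + h *\<^sub>R e) \<bullet> e)" by (rule Dcont)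
  qed (auto simp: U_def)
  have oU: "open U" "0 \<in> U" by (auto simp: U_def)
  hence L': "((\<lambda>h. integral (cbox (-a) a) (\<lambda>y. f (y + h *\<^sub>R e))) has_field_derivative
          integral (cbox (-a) a) (\<lambda>y. Df y \<bullet> e)) (at 0)"
    using L at_within_open[OF oU(2) oU(1)] by simp
  have K: "((\<lambda>h. integral\<^sup>L lborel f) has_field_derivative 0) (at 0)" by simp
  have K': "((\<lambda>h. integral (cbox (-a) a) (\<lambda>y. f (y + h *\<^sub>R e))) has_field_derivative 0) (at 0)"
    by (rule has_field_derivative_transform_within_open[OF K oU(1,2)]) (use C in auto)
  have Z: "integral (cbox (-a) a) (\<lambda>y. Df y \<bullet> e) = 0"
    using DERIV_unique[OF L' K'] .
  have gcont: "continuous_on UNIV (\<lambda>y. Df y \<bullet> e)" by (intro continuous_intros cont)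
  have gz: "\<And>y. y \<notin> S \<Longrightarrow> Df y \<bullet> e = 0" using Dfz by simp
  have "cball 0 R \<subseteq> cball (0::real^'n) (R + 1)" by (rule subset_cball) simp
  hence Sb: "S \<subseteq> cbox (-a) a" using R B by blast
  have eqi: "(\<lambda>y. Df y $ i) = (\<lambda>y. Df y \<bullet> e)" by (simp add: e_def inner_axis)
  show "integrable lebesgue (\<lambda>y. Df y $ i)" unfolding eqi using cs_facts(2)[OF gcont S gz] .
  show "(\<integral>y. Df y $ i \<partial>lebesgue) = 0" unfolding eqi
    using cs_facts(3)[OF gcont S gz] cs_facts(4)[OF gcont S gz Sb] Z by simp
qed




lemma cs_int:
  fixes g :: "real^'n::finite \<Rightarrow> 'b::{banach, second_countable_topology}" and K :: "(real^'n) set"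
  assumes cont: "continuous_on K g" and K: "compact K" and z: "\<And>y. y \<notin> K \<Longrightarrow> g y = 0"
  shows "integrable lebesgue g"
proof -
  have eq: "(\<lambda>x. indicator K x *\<^sub>R g x) = g"
    using z by (auto simp: indicator_def fun_eq_iff)
  have il: "integrable lborel g"
    using borel_integrable_compact[OF K cont] eq by simp
  hence meas: "g \<in> borel_measurable lborel" by (rule borel_measurable_integrable)
  show "integrable lebesgue g" using integrable_completion[OF meas] il by simp
qed

definition w0 :: "real \<Rightarrow> real^'n::finite \<Rightarrow> real" where "w0 s v = H (exp (2 * s))"

lemma to_euclid_w0: "to_euclid (w0 :: real \<Rightarrow> real^'n::finite \<Rightarrow> real) = UU"
proof
  fix y :: "real^'n"
  show "to_euclid w0 y = UU y"
  proof (cases "y = 0")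
    case True
    thus ?thesis by (simp add: to_euclid_def w0_def UU_def H_zero)
  next
    case False
    have "exp (2 * ln (norm y)) = norm y powr 2" using False by (simp add: powr_def)
    also have "\<dots> = y \<bullet> y" using False by (simp add: power2_norm_eq_inner)
    finally show ?thesis by (simp add: to_euclid_def w0_def UU_def)
  qed
qed

lemma UU_supp: "UU y \<noteq> 0 \<Longrightarrow> 4 < y \<bullet> y \<and> y \<bullet> y < 9"
  unfolding UU_def using H_zero by blast

lemma GG_supp: "GG y \<noteq> 0 \<Longrightarrow> 4 < y \<bullet> y \<and> y \<bullet> y < 9"
  unfolding GG_def using H'_zero by fastforce

lemma annulus: "4 < y \<bullet> y \<and> y \<bullet> y < 9 \<Longrightarrow> y \<in> cball 0 3 - ball 0 2"
proof -
  assume a: "4 < y \<bullet> y \<and> y \<bullet> y < 9"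
  hence h: "(2::real)^2 < (norm y)^2" "(norm y)^2 < (3::real)^2" by (auto simp: power2_norm_eq_inner)
  have "norm y > 2" using power_less_imp_less_base[OF h(1)] by simp
  moreover have "norm y < 3" using power_less_imp_less_base[OF h(2)] by simp
  ultimately have "norm y > 2" "norm y < 3" by auto
  thus ?thesis by auto
qed

lemma UU_zero_out: "y \<notin> cball 0 3 - ball 0 2 \<Longrightarrow> UU y = 0"
  using annulus UU_supp by blast

lemma GG_zero_out: "y \<notin> cball 0 3 - ball 0 2 \<Longrightarrow> GG y = 0"
  using annulus GG_supp by blast

lemma Kcompact: "compact (cball (0::real^'n::finite) 3 - ball 0 2)"
  by (intro compact_diff) auto

lemma weak_grad_UU: "weak_grad (UU :: real^'n::finite \<Rightarrow> real) GG"
  unfolding weak_grad_def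
proof (intro conjI allI impI)
  fix K :: "(real^'n) set" assume K: "compact K \<and> 0 \<notin> K"
  have "integrable lebesgue UU"
    by (rule cs_int[OF UU_cont Kcompact UU_zero_out])
  moreover have "K \<in> sets lebesgue" using K lmeasurable_compact by (auto simp: fmeasurable_def)
  ultimately show "set_integrable lebesgue K UU"
    unfolding set_integrable_def by (rule integrable_mult_indicator[rotated])
  have "integrable lebesgue GG"
    by (rule cs_int[OF GG_cont Kcompact GG_zero_out])
  with \<open>K \<in> sets lebesgue\<close> show "set_integrable lebesgue K GG"
    unfolding set_integrable_def by (rule integrable_mult_indicator)
next
  fix \<phi> D\<phi> i assume tf: "test_fn \<phi> (D\<phi> :: real^'n \<Rightarrow> real^'n)"
  define S where "S = closure {y. \<phi> y \<noteq> 0}"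
  have der\<phi>: "\<And>y. (\<phi> has_derivative (\<lambda>h. D\<phi> y \<bullet> h)) (at y)" and cD: "continuous_on UNIV D\<phi>"
    and S: "compact S" using tf unfolding test_fn_def S_def by blast+
  have sz: "\<phi> y = 0" if "y \<notin> S" for y
  proof (rule ccontr)
    assume "\<phi> y \<noteq> 0" hence "y \<in> {y. \<phi> y \<noteq> 0}" by simp
    hence "y \<in> S" unfolding S_def by (rule subsetD[OF closure_subset])
    thus False using that by simp
  qed
  have Dz: "\<And>y. y \<notin> S \<Longrightarrow> D\<phi> y = 0" by (rule deriv_zero_outside[OF der\<phi> S sz])
  have \<phi>cont: "continuous_on UNIV \<phi>"
    by (intro continuous_at_imp_continuous_on ballI has_derivative_continuous[OF der\<phi>])
  define Df where "Df y = UU y *\<^sub>R D\<phi> y + \<phi> y *\<^sub>R GG y" for y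
  have derf: "((\<lambda>y. UU y * \<phi> y) has_derivative (\<lambda>h. Df y \<bullet> h)) (at y)" for y
  proof -
    have "((\<lambda>y. UU y * \<phi> y) has_derivative (\<lambda>h. UU y * (D\<phi> y \<bullet> h) + (GG y \<bullet> h) * \<phi> y)) (at y)"
      by (rule has_derivative_mult[OF UU_deriv der\<phi>])
    moreover have "(\<lambda>h. UU y * (D\<phi> y \<bullet> h) + (GG y \<bullet> h) * \<phi> y) = (\<lambda>h. Df y \<bullet> h)"
      by (auto simp: Df_def fun_eq_iff inner_add_left)
    ultimately show ?thesis by simp
  qed
  have cDf: "continuous_on UNIV Df"
    unfolding Df_def[abs_def]
    by (intro continuous_on_add continuous_on_scaleR UU_cont GG_cont cD \<phi>cont)
  have fz: "\<And>y. y \<notin> S \<Longrightarrow> UU y * \<phi> y = 0" using sz by simp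
  have Z: "(\<integral>y. Df y $ i \<partial>lebesgue) = 0" by (rule ibp_zero(2)[OF derf cDf S fz])
  have I1: "integrable lebesgue (\<lambda>y. UU y * D\<phi> y $ i)"
  proof (rule cs_int[OF _ S])
    show "continuous_on S (\<lambda>y. UU y * D\<phi> y $ i)"
      by (intro continuous_on_mult UU_cont continuous_on_component continuous_on_subset[OF cD]) simp
  qed (simp add: Dz)
  have I2: "integrable lebesgue (\<lambda>y. GG y $ i * \<phi> y)"
  proof (rule cs_int[OF _ S])
    show "continuous_on S (\<lambda>y. GG y $ i * \<phi> y)"
      by (intro continuous_on_mult GG_cont continuous_on_component continuous_on_subset[OF \<phi>cont]) simp
  qed (simp add: sz)
  have "(\<lambda>y. Df y $ i) = (\<lambda>y. UU y * D\<phi> y $ i + GG y $ i * \<phi> y)"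
    by (auto simp: Df_def fun_eq_iff)
  with Z have "(\<integral>y. UU y * D\<phi> y $ i + GG y $ i * \<phi> y \<partial>lebesgue) = 0" by simp
  hence "(\<integral>y. UU y * D\<phi> y $ i \<partial>lebesgue) + (\<integral>y. GG y $ i * \<phi> y \<partial>lebesgue) = 0"
    using Bochner_Integration.integral_add[OF I1 I2] by simp
  thus "(\<integral>y. UU y * D\<phi> y $ i \<partial>lebesgue) = - (\<integral>y. GG y $ i * \<phi> y \<partial>lebesgue)" by simp
qed



definition rho :: "real^'n::finite \<Rightarrow> real" where
  "rho y = (if y = 0 then 0 else 1 / (sphere_area TYPE('n) * norm y ^ CARD('n)))"

lemma sphere_area_nonneg: "sphere_area TYPE('n::finite) \<ge> 0"
  unfolding sphere_area_def by simp

lemma rho_nonneg: "rho (y :: real^'n::finite) \<ge> 0"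
  unfolding rho_def using sphere_area_nonneg[where 'n='n] by simp

lemma rho_meas: "rho \<in> borel_measurable (lebesgue :: (real^'n::finite) measure)"
  unfolding rho_def[abs_def] by (intro measurable_completion) measurable

lemma cyl_measure_eq: "cyl_measure = density lebesgue (\<lambda>y. ennreal (rho y))"
  unfolding cyl_measure_def rho_def ..

lemma int_cyl:
  fixes F :: "real^'n::finite \<Rightarrow> real"
  assumes cont: "continuous_on UNIV F" and z: "\<And>y. y \<notin> cball 0 3 - ball 0 2 \<Longrightarrow> F y = 0"
  shows "integrable cyl_measure F"
proof -
  have Fm: "F \<in> borel_measurable lebesgue"
    by (intro measurable_completion) (simp add: borel_measurable_continuous_onI[OF cont])
  have "integrable lebesgue (\<lambda>y. rho y *\<^sub>R F y)"
  proof (rule cs_int[OF _ Kcompact])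
    have "continuous_on (cball 0 3 - ball 0 2) (\<lambda>y::real^'n. inverse (sphere_area TYPE('n)) * inverse (norm y ^ CARD('n)) * F y)"
      by (intro continuous_intros continuous_on_subset[OF cont]) auto
    moreover have "\<And>y::real^'n. y \<in> cball 0 3 - ball 0 2 \<Longrightarrow> rho y *\<^sub>R F y = inverse (sphere_area TYPE('n)) * inverse (norm y ^ CARD('n)) * F y"
      by (auto simp: rho_def divide_inverse inverse_mult_distrib)
    ultimately show "continuous_on (cball 0 3 - ball 0 2) (\<lambda>y::real^'n. rho y *\<^sub>R F y)"
      using continuous_on_cong by (smt (verit))
  qed (simp add: z)
  thus ?thesis unfolding cyl_measure_eq
    by (subst integrable_density) (auto simp: Fm rho_meas rho_nonneg)
qed

lemma H1_w0: "H1_cyl (w0 :: real \<Rightarrow> real^'n::finite \<Rightarrow> real)"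
  unfolding H1_cyl_def to_euclid_w0
proof (intro exI conjI)
  show "weak_grad (UU :: real^'n \<Rightarrow> real) GG" by (rule weak_grad_UU)
  show "integrable cyl_measure (\<lambda>y::real^'n. (UU y)^2)"
    by (rule int_cyl) (auto intro!: continuous_intros UU_cont simp: UU_zero_out)
  show "integrable cyl_measure (\<lambda>y::real^'n. norm y ^ 2 * norm (GG y) ^ 2)"
    by (rule int_cyl) (auto intro!: continuous_intros GG_cont simp: GG_zero_out)
qed

lemma s_only_w0: "s_only w0"
  unfolding s_only_def w0_def by simp

lemma nonzero_w0: "nonzero_cyl (w0 :: real \<Rightarrow> real^'n::finite \<Rightarrow> real)"
  unfolding nonzero_cyl_def to_euclid_w0
proof
  assume "AE y in lebesgue. (UU :: real^'n \<Rightarrow> real) y = 0"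
  then obtain N :: "(real^'n) set" where N: "{x \<in> space lebesgue. \<not> UU x = 0} \<subseteq> N" "emeasure lebesgue N = 0" "N \<in> sets lebesgue"
    by (elim AE_E) blast
  define Ob where "Ob = {y::real^'n. 4 < y \<bullet> y \<and> y \<bullet> y < 9}"
  have "Ob \<subseteq> N"
  proof
    fix x assume "x \<in> Ob"
    hence "UU x \<noteq> 0" using H_pos[of "x \<bullet> x"] by (simp add: Ob_def UU_def)
    thus "x \<in> N" using N(1) by auto
  qed
  moreover have "negligible N" using N(2,3) by (simp add: negligible_iff_null_sets null_setsI)
  ultimately have "negligible Ob" using negligible_subset by blast
  moreover have "open Ob" unfolding Ob_def
    by (intro open_Collect_conj open_Collect_less continuous_intros)
  moreover have "Ob \<noteq> {}"
  proof -
    obtain i :: 'n where True by simp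
    have "(5/2) *\<^sub>R axis i (1::real) \<in> Ob" by (simp add: Ob_def inner_axis_axis)
    thus ?thesis by auto
  qed
  ultimately show False using open_not_negligible by blast
qed

lemma exists_sonly: "\<exists>w::real \<Rightarrow> real^'n::finite \<Rightarrow> real. H1_cyl w \<and> nonzero_cyl w \<and> s_only w"
  using H1_w0 nonzero_w0 s_only_w0 by blast



lemma young_step:
  fixes \<theta> k x y :: real
  assumes "0 < \<theta>" "\<theta> \<le> 1" "k > 0" "x > 0" "y > 0"
  shows "x powr \<theta> * y powr (1 - \<theta>) \<le> k powr \<theta> * (\<theta> * x / k + (1 - \<theta>) * y)"
proof -
  have "(x / k) powr \<theta> * y powr (1 - \<theta>) \<le> \<theta> * (x / k) + (1 - \<theta>) * y"
    using assms by (intro Youngs_inequality_0) auto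
  hence "k powr \<theta> * ((x / k) powr \<theta> * y powr (1 - \<theta>)) \<le> k powr \<theta> * (\<theta> * (x / k) + (1 - \<theta>) * y)"
    by (intro mult_left_mono) auto
  moreover have "k powr \<theta> * ((x / k) powr \<theta> * y powr (1 - \<theta>)) = x powr \<theta> * y powr (1 - \<theta>)"
    using assms by (simp add: powr_divide)
  ultimately show ?thesis by simp
qed

lemma Lnorm_nonneg: "Lnorm q u \<ge> 0"
  by (simp add: Lnorm_def)

lemma grad_sq_nonneg: "grad_sq u \<ge> 0"
  unfolding grad_sq_def by (rule integral_nonneg_AE) simp

lemma QCKN_nonneg: "QCKN a p l u \<ge> 0"
  unfolding QCKN_def by simp

lemma main_abstract:
  fixes u :: "real \<Rightarrow> real^'n::finite \<Rightarrow> real"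
    and p \<theta> \<Lambda> \<mu> t :: real
  assumes ne: "\<exists>w::real \<Rightarrow> real^'n \<Rightarrow> real. H1_cyl w \<and> nonzero_cyl w \<and> s_only w"
    and th: "0 < \<theta>" "\<theta> \<le> 1"
    and lam: "\<Lambda> > 0"
    and "QCKN \<theta> p \<Lambda> u = KCKN TYPE('n) \<theta> p \<Lambda>"
    and "t = grad_sq u / (Lnorm 2 u)^2"
    and mu: "\<theta> * \<mu> = (1 - \<theta>) * t + \<Lambda>"
  shows "QCKN 1 p \<mu> u \<le> KCKN_star TYPE('n) 1 p \<mu>"
proof -
  let ?S = "{u :: real \<Rightarrow> real^'n \<Rightarrow> real. H1_cyl u \<and> nonzero_cyl u}"
  let ?T = "{u :: real \<Rightarrow> real^'n \<Rightarrow> real. H1_cyl u \<and> nonzero_cyl u \<and> s_only u}"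
  have low: "QCKN \<theta> p \<Lambda> u \<le> QCKN \<theta> p \<Lambda> w" if "w \<in> ?S" for w
  proof -
    have "KCKN TYPE('n) \<theta> p \<Lambda> \<le> QCKN \<theta> p \<Lambda> w"
      unfolding KCKN_def
      by (rule cINF_lower[OF _ that]) (auto intro: bdd_belowI2[where m=0] QCKN_nonneg)
    thus ?thesis using assms by simp
  qed
  have Tne: "?T \<noteq> {}" using ne by auto
  show ?thesis
    unfolding KCKN_star_def
  proof (rule cINF_greatest[OF Tne])
    fix w assume wT: "w \<in> ?T"
    hence wS: "w \<in> ?S" by auto
    define L2 where "L2 = Lnorm 2 u"
    define Lp where "Lp = Lnorm p u"
    define a where "a = grad_sq u"
    have L2n: "L2 \<ge> 0" "Lp \<ge> 0" "a \<ge> 0" using Lnorm_nonneg grad_sq_nonneg L2_def Lp_def a_def by auto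
    show "QCKN 1 p \<mu> u \<le> QCKN 1 p \<mu> w"
    proof (cases "L2 = 0 \<or> Lp = 0")
      case True
      hence "QCKN 1 p \<mu> u = 0" unfolding QCKN_def L2_def[symmetric] Lp_def[symmetric] by auto
      thus ?thesis using QCKN_nonneg by simp
    next
      case False
      hence pos: "L2 > 0" "Lp > 0" using L2n by auto
      define b where "b = L2^2"
      define c where "c = Lp^2"
      have bc: "b > 0" "c > 0" using pos b_def c_def by auto
      have tdef: "t = a / b" using assms a_def b_def L2_def by simp
      define k where "k = t + \<Lambda>"
      have t0: "t \<ge> 0" using tdef L2n bc by simp
      have k0: "k > 0" using t0 assms k_def by simp
      have tb: "a = t * b" using tdef bc by simp
      have mu0: "\<mu> > 0"
      proof -
        have "(1 - \<theta>) * t \<ge> 0" using th t0 by simp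
        hence "\<theta> * \<mu> > 0" using mu lam by linarith
        thus ?thesis using th by (simp add: zero_less_mult_iff)
      qed
      have L2pow: "L2 powr (2 * (1 - \<theta>)) = b powr (1 - \<theta>)"
      proof -
        have "L2 powr (2 * (1 - \<theta>)) = (L2 powr 2) powr (1 - \<theta>)" by (simp only: powr_powr)
        thus ?thesis using pos by (simp add: b_def)
      qed
      have ab: "a + \<Lambda> * b = k * b" unfolding tb k_def by (simp add: algebra_simps)
      have tmu: "\<theta> * (t + \<mu>) = k" using mu k_def by (simp add: algebra_simps)
      have amu: "a + \<mu> * b = k * b / \<theta>"
      proof -
        have "a + \<mu> * b = (t + \<mu>) * b" unfolding tb by (simp add: algebra_simps)
        also have "t + \<mu> = k / \<theta>" using tmu th by (simp add: field_simps)
        finally show ?thesis by simp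
      qed
      have Qu: "QCKN \<theta> p \<Lambda> u = k powr \<theta> * b / c"
      proof -
        have "QCKN \<theta> p \<Lambda> u = (a + \<Lambda> * b) powr \<theta> * L2 powr (2 * (1 - \<theta>)) / c"
          by (simp only: QCKN_def L2_def Lp_def a_def b_def c_def)
        also have "\<dots> = (k*b) powr \<theta> * b powr (1 - \<theta>) / c" by (simp only: ab L2pow)
        also have "\<dots> = k powr \<theta> * (b powr \<theta> * b powr (1 - \<theta>)) / c"
          using k0 bc by (simp add: powr_mult)
        also have "b powr \<theta> * b powr (1 - \<theta>) = b" using bc by (simp add: powr_add[symmetric])
        finally show ?thesis by simp
      qed
      have Qu1: "QCKN 1 p \<mu> u = k * b / \<theta> / c"
      proof -
        have "QCKN 1 p \<mu> u = (a + \<mu> * b) powr 1 * L2 powr (2 * (1 - 1)) / c"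
          by (simp only: QCKN_def L2_def Lp_def a_def b_def c_def)
        also have "\<dots> = (a + \<mu> * b) / c"
          using pos bc mu0 L2n by (simp add: powr_one)
        finally show ?thesis by (simp add: amu)
      qed
      have Qupos: "QCKN \<theta> p \<Lambda> u > 0" unfolding Qu using k0 bc by simp
      have Qw: "QCKN \<theta> p \<Lambda> w \<ge> QCKN \<theta> p \<Lambda> u" using low[OF wS] .
      define L2' where "L2' = Lnorm 2 w"
      define Lp' where "Lp' = Lnorm p w"
      define a' where "a' = grad_sq w"
      have L2n': "L2' \<ge> 0" "Lp' \<ge> 0" "a' \<ge> 0" using Lnorm_nonneg grad_sq_nonneg L2'_def Lp'_def a'_def by auto
      have Qwdef: "QCKN \<theta> p \<Lambda> w = (a' + \<Lambda> * L2'^2) powr \<theta> * L2' powr (2 * (1 - \<theta>)) / Lp'^2"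
        by (simp only: QCKN_def L2'_def Lp'_def a'_def)
      have pos': "L2' > 0" "Lp' > 0"
      proof -
        show "L2' > 0"
        proof (rule ccontr)
          assume "\<not> L2' > 0" hence "L2' = 0" using L2n' by simp
          hence "QCKN \<theta> p \<Lambda> w = 0" unfolding Qwdef by simp
          thus False using Qw Qupos by simp
        qed
        show "Lp' > 0"
        proof (rule ccontr)
          assume "\<not> Lp' > 0" hence "Lp' = 0" using L2n' by simp
          hence "QCKN \<theta> p \<Lambda> w = 0" unfolding Qwdef by simp
          thus False using Qw Qupos by simp
        qed
      qed
      define b' where "b' = L2'^2"
      define c' where "c' = Lp'^2"
      have bc': "b' > 0" "c' > 0" using pos' b'_def c'_def by auto
      have L2pow': "L2' powr (2 * (1 - \<theta>)) = b' powr (1 - \<theta>)"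
      proof -
        have "L2' powr (2 * (1 - \<theta>)) = (L2' powr 2) powr (1 - \<theta>)" by (simp only: powr_powr)
        thus ?thesis using pos' by (simp add: b'_def)
      qed
      have x0: "a' + \<Lambda> * b' > 0" using bc'(1) L2n'(3) lam by (simp add: add_nonneg_pos)
      have Y: "(a' + \<Lambda> * b') powr \<theta> * b' powr (1 - \<theta>) \<le> k powr \<theta> * (\<theta> * (a' + \<Lambda> * b') / k + (1 - \<theta>) * b')"
        by (rule young_step[OF th k0 x0 bc'(1)])
      have kk: "\<theta> * \<Lambda> + (1 - \<theta>) * k = \<theta> * \<mu>" using mu k_def by (simp add: algebra_simps)
      have eq0: "\<theta> * (a' + \<Lambda> * b') / k + (1 - \<theta>) * b' = \<theta> / k * (a' + \<mu> * b')"
      proof -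
        have "\<theta> * (a' + \<Lambda> * b') / k + (1 - \<theta>) * b' = (\<theta> * a' + (\<theta> * \<Lambda> + (1 - \<theta>) * k) * b') / k"
          using k0 by (simp add: field_simps)
        also have "\<dots> = (\<theta> * a' + \<theta> * \<mu> * b') / k" by (simp only: kk)
        also have "\<dots> = \<theta> / k * (a' + \<mu> * b')" by (simp add: field_simps)
        finally show ?thesis .
      qed
      have eq: "k powr \<theta> * (\<theta> * (a' + \<Lambda> * b') / k + (1 - \<theta>) * b') = \<theta> * (k powr \<theta> / k) * (a' + \<mu> * b')"
        unfolding eq0 by simp
      have Qw1: "QCKN 1 p \<mu> w = (a' + \<mu> * b') / c'"
      proof -
        have "QCKN 1 p \<mu> w = (a' + \<mu> * b') powr 1 * L2' powr (2 * (1 - 1)) / c'"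
          by (simp only: QCKN_def L2'_def Lp'_def a'_def b'_def c'_def)
        also have "\<dots> = (a' + \<mu> * b') / c'"
          using pos' bc' mu0 L2n' by (simp add: powr_one)
        finally show ?thesis .
      qed
      have "QCKN \<theta> p \<Lambda> w = (a' + \<Lambda> * b') powr \<theta> * b' powr (1 - \<theta>) / c'"
        unfolding Qwdef L2pow' b'_def c'_def ..
      also have "\<dots> \<le> (\<theta> * (k powr \<theta> / k) * (a' + \<mu> * b')) / c'"
        using Y eq bc' by (intro divide_right_mono) auto
      also have "\<dots> = \<theta> * (k powr \<theta> / k) * QCKN 1 p \<mu> w" unfolding Qw1 by simp
      finally have "QCKN \<theta> p \<Lambda> w \<le> \<theta> * (k powr \<theta> / k) * QCKN 1 p \<mu> w" .
      moreover have "QCKN \<theta> p \<Lambda> u = \<theta> * (k powr \<theta> / k) * QCKN 1 p \<mu> u"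
        unfolding Qu Qu1 using k0 th by simp
      ultimately have "\<theta> * (k powr \<theta> / k) * QCKN 1 p \<mu> u \<le> \<theta> * (k powr \<theta> / k) * QCKN 1 p \<mu> w"
        using Qw by simp
      moreover have "\<theta> * (k powr \<theta> / k) > 0" using th k0 by simp
      ultimately show ?thesis by (rule mult_left_le_imp_le)
    qed
  qed
qed


theorem proposition1:
  fixes u :: "real \<Rightarrow> real^'n::finite \<Rightarrow> real"
    and p \<theta> \<Lambda> \<mu> t :: real
  assumes "CARD('n) \<ge> 2"
    and "subcritical CARD('n) p"
    and "vartheta p CARD('n) \<le> \<theta>" and "\<theta> \<le> 1"
    and "\<Lambda> > 0"
    and "H1_cyl u" and "nonzero_cyl u"
    and "QCKN \<theta> p \<Lambda> u = KCKN TYPE('n) \<theta> p \<Lambda>"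
    and "t = grad_sq u / (Lnorm 2 u)^2"
    and "(Lnorm 2 u)^2 = \<theta> / (t + \<Lambda>) * (Lnorm p u) powr p"
    and "\<theta> * \<mu> = (1 - \<theta>) * t + \<Lambda>"
    and "weak_solution \<mu> p u"
  shows "QCKN 1 p \<mu> u \<le> KCKN_star TYPE('n) 1 p \<mu>"
proof -
  have p2: "p > 2" using assms(2) by (simp add: subcritical_def)
  have "vartheta p CARD('n) > 0"
    unfolding vartheta_def using p2 assms(1) by (simp add: divide_pos_pos)
  hence th: "\<theta> > 0" using assms(3) by simp
  show ?thesis
    by (rule main_abstract[OF exists_sonly th assms(4) assms(5) assms(8) assms(9) assms(11)])
qed

end
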